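(* Let $P$ be a bounded complete dcpo. If $\Sigma P\times\Sigma P$ is a Fréchet space, then $\Sigma P$ is sober.
   Context: A dcpo is a poset in which every directed subset has a supremum; it is bounded complete if every subset having an upper bound has a supremum. $\Sigma P$ denotes $P$ with the Scott topology (a set $U$ is Scott open iff $U$ is an upper set and for every directed $D$, $\bigvee D\in U$ implies $D\cap U\neq\emptyset$). A topological space is Fréchet if whenever $x$ lies in the closure of a set $A$, some sequence in $A$ converges to $x$. A $T_0$ space is sober if every irreducible closed set equals $\overline{\{x\}}$ for some point $x$. *)

theory Defs
  imports "HOL-Analysis.Analysis"
begin

text \<open>The poset P is the whole type 'a with its partial order.\<close>

definition is_sup :: "'a::order set \<Rightarrow> 'a \<Rightarrow> bool" where
  "is_sup A s \<longleftrightarrow> (\<forall>a\<in>A. a \<le> s) \<and> (\<forall>u. (\<forall>a\<in>A. a \<le> u) \<longrightarrow> s \<le> u)"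

definition directed :: "'a::order set \<Rightarrow> bool" where
  "directed D \<longleftrightarrow> D \<noteq> {} \<and> (\<forall>x\<in>D. \<forall>y\<in>D. \<exists>z\<in>D. x \<le> z \<and> y \<le> z)"

definition dcpo :: "'a::order itself \<Rightarrow> bool" where
  "dcpo _ \<longleftrightarrow> (\<forall>D::'a set. directed D \<longrightarrow> (\<exists>s. is_sup D s))"

definition bounded_complete :: "'a::order itself \<Rightarrow> bool" where
  "bounded_complete _ \<longleftrightarrow> (\<forall>A::'a set. (\<exists>u. \<forall>a\<in>A. a \<le> u) \<longrightarrow> (\<exists>s. is_sup A s))"

definition scott_open :: "'a::order set \<Rightarrow> bool" where
  "scott_open U \<longleftrightarrow> (\<forall>x y. x \<in> U \<and> x \<le> y \<longrightarrow> y \<in> U) \<and>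
     (\<forall>D s. directed D \<and> is_sup D s \<and> s \<in> U \<longrightarrow> D \<inter> U \<noteq> {})"

definition scott_topology :: "'a::order topology" where
  "scott_topology = topology scott_open"

definition frechet_space :: "'a topology \<Rightarrow> bool" where
  "frechet_space X \<longleftrightarrow> (\<forall>A x. A \<subseteq> topspace X \<and> x \<in> X closure_of A \<longrightarrow>
     (\<exists>\<sigma>::nat \<Rightarrow> 'a. (\<forall>n. \<sigma> n \<in> A) \<and> limitin X \<sigma> x sequentially))"

definition irreducible_in :: "'a topology \<Rightarrow> 'a set \<Rightarrow> bool" where
  "irreducible_in X C \<longleftrightarrow> C \<noteq> {} \<and> C \<subseteq> topspace X \<and>
     (\<forall>F1 F2. closedin X F1 \<and> closedin X F2 \<and> C \<subseteq> F1 \<union> F2 \<longrightarrow> C \<subseteq> F1 \<or> C \<subseteq> F2)"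

definition sober_space :: "'a topology \<Rightarrow> bool" where
  "sober_space X \<longleftrightarrow> t0_space X \<and>
     (\<forall>C. closedin X C \<and> irreducible_in X C \<longrightarrow> (\<exists>x\<in>topspace X. C = X closure_of {x}))"

end

theory Submission
  imports Defs
begin

lemma scott_istopology: "istopology (scott_open :: 'a::order set \<Rightarrow> bool)"
  unfolding istopology_def
proof (intro conjI allI impI)
  fix S T :: "'a set"
  assume S: "scott_open S" and T: "scott_open T"
  show "scott_open (S \<inter> T)"
    unfolding scott_open_def
  proof (intro conjI allI impI)
    fix x y assume "x \<in> S \<inter> T \<and> x \<le> y"
    then show "y \<in> S \<inter> T" using S T unfolding scott_open_def by blast
  next
    fix D s assume a: "directed D \<and> is_sup D s \<and> s \<in> S \<inter> T"
    then obtain x where x: "x \<in> D" "x \<in> S" using S unfolding scott_open_def by blast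
    obtain y where y: "y \<in> D" "y \<in> T" using a T unfolding scott_open_def by blast
    obtain z where z: "z \<in> D" "x \<le> z" "y \<le> z" using a x y unfolding directed_def by blast
    have "z \<in> S" "z \<in> T" using S T x y z unfolding scott_open_def by blast+
    then show "D \<inter> (S \<inter> T) \<noteq> {}" using z by blast
  qed
next
  fix K :: "'a set set"
  assume K: "\<forall>S\<in>K. scott_open S"
  show "scott_open (\<Union>K)"
    unfolding scott_open_def
  proof (intro conjI allI impI)
    fix x y assume "x \<in> \<Union>K \<and> x \<le> y"
    then show "y \<in> \<Union>K" using K unfolding scott_open_def by blast
  next
    fix D s assume a: "directed D \<and> is_sup D s \<and> s \<in> \<Union>K"
    then obtain S where "S \<in> K" "s \<in> S" by blast
    then have "D \<inter> S \<noteq> {}" using a K unfolding scott_open_def by blast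
    then show "D \<inter> \<Union>K \<noteq> {}" using \<open>S \<in> K\<close> by blast
  qed
qed

lemma openin_scott: "openin (scott_topology :: 'a::order topology) = scott_open"
  by (simp add: scott_topology_def scott_istopology)

lemma scott_open_UNIV: "scott_open (UNIV :: 'a::order set)"
  unfolding scott_open_def directed_def by auto

lemma topspace_scott: "topspace (scott_topology :: 'a::order topology) = UNIV"
  unfolding topspace_def openin_scott using scott_open_UNIV by blast

lemma closedin_scott: "closedin (scott_topology :: 'a::order topology) C \<longleftrightarrow> scott_open (- C)"
  unfolding closedin_def topspace_scott openin_scott by (simp add: Compl_eq_Diff_UNIV)

lemma closed_lower:
  assumes "scott_open (- C)" "x \<in> C" "y \<le> x"
  shows "y \<in> C"
  using assms unfolding scott_open_def by blast

lemma closed_sup: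
  assumes "scott_open (- C)" "directed D" "D \<subseteq> C" "is_sup D s"
  shows "s \<in> C"
  using assms unfolding scott_open_def by blast

lemma directed_finite_ub:
  assumes "directed D" "finite F" "F \<subseteq> D"
  shows "\<exists>e\<in>D. \<forall>x\<in>F. x \<le> e"
  using assms(2,3)
proof (induction F rule: finite_induct)
  case empty
  then show ?case using assms(1) unfolding directed_def by blast
next
  case (insert x F)
  then obtain e where e: "e \<in> D" "\<forall>y\<in>F. y \<le> e" by blast
  obtain z where "z \<in> D" "x \<le> z" "e \<le> z" using assms(1) e insert.prems unfolding directed_def by blast
  then show ?case using e order_trans by blast
qed

definition nb :: "'a::order set \<Rightarrow> 'a \<Rightarrow> 'a \<Rightarrow> bool" where
  "nb C u v \<longleftrightarrow> \<not> (\<exists>c\<in>C. u \<le> c \<and> v \<le> c)"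

lemma nb_sym: "nb C u v = nb C v u"
  unfolding nb_def by blast

lemma nb_mono: "nb C u v \<Longrightarrow> v \<le> v' \<Longrightarrow> nb C u v'"
  unfolding nb_def using order_trans by blast

lemma nb_open:
  assumes dc: "dcpo TYPE('a::order)" and bc: "bounded_complete TYPE('a)"
    and C: "scott_open (- (C::'a set))"
  shows "scott_open {v. nb C u v}"
  unfolding scott_open_def
proof (intro conjI allI impI)
  fix x y assume "x \<in> {v. nb C u v} \<and> x \<le> y"
  then show "y \<in> {v. nb C u v}" using nb_mono by blast
next
  fix D s assume a: "directed D \<and> is_sup D s \<and> s \<in> {v. nb C u v}"
  show "D \<inter> {v. nb C u v} \<noteq> {}"
  proof
    assume E: "D \<inter> {v. nb C u v} = {}"
    define j where "j e = (SOME t. is_sup {u, e} t)" for e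
    have jC: "j e \<in> C \<and> is_sup {u, e} (j e)" if eD: "e \<in> D" for e
    proof -
      obtain c where c: "c \<in> C" "u \<le> c" "e \<le> c" using E eD unfolding nb_def by blast
      have "\<exists>t. is_sup {u, e} t" using bc c unfolding bounded_complete_def by blast
      then have js: "is_sup {u, e} (j e)" unfolding j_def by (rule someI_ex)
      then have "j e \<le> c" using c unfolding is_sup_def by blast
      then show ?thesis using closed_lower[OF C c(1)] js by blast
    qed
    have dj: "directed (j ` D)"
      unfolding directed_def
    proof (intro conjI ballI)
      show "j ` D \<noteq> {}" using a unfolding directed_def by blast
    next
      fix x y assume "x \<in> j ` D" "y \<in> j ` D"
      then obtain e1 e2 where e: "e1 \<in> D" "e2 \<in> D" "x = j e1" "y = j e2" by blast
      obtain e3 where e3: "e3 \<in> D" "e1 \<le> e3" "e2 \<le> e3" using a e unfolding directed_def by blast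
      have s3: "is_sup {u, e3} (j e3)" using jC e3 by blast
      have u3: "u \<le> j e3" "e3 \<le> j e3" using s3 unfolding is_sup_def by auto
      have "\<forall>a\<in>{u, e1}. a \<le> j e3" using u3 e3 order_trans by auto
      then have "j e1 \<le> j e3" using jC[OF e(1)] unfolding is_sup_def by blast
      moreover have "\<forall>a\<in>{u, e2}. a \<le> j e3" using u3 e3 order_trans by auto
      then have "j e2 \<le> j e3" using jC[OF e(2)] unfolding is_sup_def by blast
      ultimately show "\<exists>z\<in>j ` D. x \<le> z \<and> y \<le> z" using e e3 by blast
    qed
    then obtain t where t: "is_sup (j ` D) t" using dc unfolding dcpo_def by blast
    have tC: "t \<in> C" using closed_sup[OF C dj _ t] jC by blast
    obtain e0 where e0: "e0 \<in> D" using a unfolding directed_def by blast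
    have ub: "\<And>e. e \<in> D \<Longrightarrow> u \<le> t \<and> e \<le> t"
    proof -
      fix e assume eD: "e \<in> D"
      have "j e \<le> t" using t eD unfolding is_sup_def by blast
      moreover have "u \<le> j e" "e \<le> j e" using jC[OF eD] unfolding is_sup_def by auto
      ultimately show "u \<le> t \<and> e \<le> t" using order_trans by blast
    qed
    have "u \<le> t" using ub e0 by blast
    moreover have "s \<le> t" using a ub unfolding is_sup_def by blast
    ultimately show False using a tC unfolding nb_def by blast
  qed
qed

lemma closedin_lower:
  "closedin (scott_topology :: 'a::order topology) F \<Longrightarrow> s \<in> F \<Longrightarrow> x \<le> s \<Longrightarrow> x \<in> F"
  using closed_lower closedin_scott by blast

theorem corollary3p8:
  assumes "dcpo TYPE('a::order)"
    and "bounded_complete TYPE('a)"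
    and "frechet_space (prod_topology (scott_topology :: 'a topology) (scott_topology :: 'a topology))"
  shows "sober_space (scott_topology :: 'a topology)"
proof -
  let ?X = "scott_topology :: 'a topology"
  have t0: "t0_space ?X"
    unfolding t0_space_def
  proof (intro ballI impI)
    fix x y :: 'a assume "x \<noteq> y"
    then have "\<not> x \<le> y \<or> \<not> y \<le> x" by auto
    then show "\<exists>U. openin ?X U \<and> (x \<notin> U \<longleftrightarrow> y \<in> U)"
    proof
      assume nxy: "\<not> x \<le> y"
      have "openin ?X (- (?X closure_of {y}))" using closedin_closure_of closedin_scott openin_scott by metis
      moreover have "y \<in> ?X closure_of {y}" using closure_of_subset[of "{y}" ?X] by (simp add: topspace_scott)
      moreover have "x \<notin> ?X closure_of {y}"
      proof
        assume "x \<in> ?X closure_of {y}"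
        moreover have "closedin ?X {z. z \<le> y}"
          unfolding closedin_scott scott_open_def
        proof (intro conjI allI impI)
          fix a b assume "a \<in> - {z. z \<le> y} \<and> a \<le> b" then show "b \<in> - {z. z \<le> y}"
            using order_trans by auto
        next
          fix D s assume a: "directed D \<and> is_sup D s \<and> s \<in> - {z. z \<le> y}"
          show "D \<inter> - {z. z \<le> y} \<noteq> {}"
          proof
            assume "D \<inter> - {z. z \<le> y} = {}"
            then have "\<forall>d\<in>D. d \<le> y" by blast
            then show False using a unfolding is_sup_def by auto
          qed
        qed
        then have "?X closure_of {y} \<subseteq> {z. z \<le> y}" by (rule closure_of_minimal[rotated]) auto
        ultimately show False using nxy by blast
      qed
      ultimately show ?thesis by blast
    next
      assume nyx: "\<not> y \<le> x"
      have "openin ?X (- (?X closure_of {x}))" using closedin_closure_of closedin_scott openin_scott by metis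
      moreover have "x \<in> ?X closure_of {x}" using closure_of_subset[of "{x}" ?X] by (simp add: topspace_scott)
      moreover have "y \<notin> ?X closure_of {x}"
      proof
        assume "y \<in> ?X closure_of {x}"
        moreover have "closedin ?X {z. z \<le> x}"
          unfolding closedin_scott scott_open_def
        proof (intro conjI allI impI)
          fix a b assume "a \<in> - {z. z \<le> x} \<and> a \<le> b" then show "b \<in> - {z. z \<le> x}"
            using order_trans by auto
        next
          fix D s assume a: "directed D \<and> is_sup D s \<and> s \<in> - {z. z \<le> x}"
          show "D \<inter> - {z. z \<le> x} \<noteq> {}"
          proof
            assume "D \<inter> - {z. z \<le> x} = {}"
            then have "\<forall>d\<in>D. d \<le> x" by blast
            then show False using a unfolding is_sup_def by auto
          qed
        qed
        then have "?X closure_of {x} \<subseteq> {z. z \<le> x}" by (rule closure_of_minimal[rotated]) auto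
        ultimately show False using nyx by blast
      qed
      ultimately show ?thesis by blast
    qed
  qed
  have irr: "\<exists>x\<in>topspace ?X. C = ?X closure_of {x}"
    if Ccl: "closedin ?X C" and Cirr: "irreducible_in ?X C" for C
  proof -
    have cC: "scott_open (- C)" using Ccl closedin_scott by blast
    have Cne: "C \<noteq> {}" using Cirr unfolding irreducible_in_def by blast
    have bnd: "\<exists>c\<in>C. a \<le> c \<and> b \<le> c" if aC: "a \<in> C" and bC: "b \<in> C" for a b
    proof (rule ccontr)
      assume "\<not> (\<exists>c\<in>C. a \<le> c \<and> b \<le> c)"
      then have Wab: "nb C a b" unfolding nb_def by blast
      have opn2: "scott_open {v. nb C u v}" for u using nb_open[OF assms(1,2) cC] .
      have opn1: "scott_open {u. nb C u v}" for v
      proof -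
        have "{u. nb C u v} = {u. nb C v u}" using nb_sym[of C] by blast
        then show ?thesis using opn2[of v] by simp
      qed
      let ?D = "(\<lambda>c. (c, c)) ` C"
      have "(a, b) \<in> prod_topology ?X ?X closure_of ?D"
        unfolding in_closure_of
      proof (intro conjI allI impI)
        show "(a, b) \<in> topspace (prod_topology ?X ?X)" by (simp add: topspace_scott)
      next
        fix T assume T: "(a, b) \<in> T \<and> openin (prod_topology ?X ?X) T"
        then obtain U V where UV: "openin ?X U" "openin ?X V" "a \<in> U" "b \<in> V" "U \<times> V \<subseteq> T"
          unfolding openin_prod_topology_alt by blast
        have "C \<inter> U \<inter> V \<noteq> {}"
        proof
          assume e: "C \<inter> U \<inter> V = {}"
          have "closedin ?X (- U)" "closedin ?X (- V)" using UV by (simp_all add: closedin_scott openin_scott)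
          moreover have "C \<subseteq> (- U) \<union> (- V)" using e by blast
          ultimately have "C \<subseteq> - U \<or> C \<subseteq> - V" using Cirr unfolding irreducible_in_def by blast
          then show False using UV aC bC by blast
        qed
        then obtain c where "c \<in> C" "c \<in> U" "c \<in> V" by blast
        then show "\<exists>y. y \<in> ?D \<and> y \<in> T" using UV by blast
      qed
      then obtain \<sigma> where sg: "\<forall>n. \<sigma> n \<in> ?D" and lim: "limitin (prod_topology ?X ?X) \<sigma> (a, b) sequentially"
        using assms(3)[unfolded frechet_space_def, rule_format, of ?D "(a, b)"] by (auto simp: topspace_scott)
      define c where "c n = fst (\<sigma> n)" for n
      have cC': "c n \<in> C" for n
      proof -
        obtain x where "x \<in> C" "\<sigma> n = (x, x)" using sg by blast
        then show ?thesis unfolding c_def by simp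
      qed
      have "fst \<circ> \<sigma> = c" "snd \<circ> \<sigma> = c" using sg unfolding c_def fun_eq_iff comp_def by (metis (no_types, lifting) fst_conv imageE snd_conv)+
      then have la: "limitin ?X c a sequentially" and lb: "limitin ?X c b sequentially"
        using lim unfolding limitin_pairwise by auto
      have "eventually (\<lambda>n. c n \<in> {u. nb C u b}) sequentially"
        using la opn1[of b] Wab unfolding limitin_def openin_scott by blast
      then obtain N where N: "\<And>n. n \<ge> N \<Longrightarrow> nb C (c n) b" unfolding eventually_sequentially by auto
      define V where "V = {v. nb C a v \<and> (\<forall>n\<ge>N. nb C (c n) v)}"
      have bV: "b \<in> V" unfolding V_def using Wab N by blast
      have oV: "scott_open V"
        unfolding scott_open_def
      proof (intro conjI allI impI)
        fix x y assume "x \<in> V \<and> x \<le> y" then show "y \<in> V" unfolding V_def using nb_mono by blast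
      next
        fix D d assume a: "directed D \<and> is_sup D d \<and> d \<in> V"
        then have "D \<inter> {v. nb C a v} \<noteq> {}" using opn2[of a] unfolding scott_open_def V_def by blast
        then obtain e0 where e0: "e0 \<in> D" "nb C a e0" by blast
        have "eventually (\<lambda>n. c n \<in> {u. nb C u e0}) sequentially"
          using la opn1[of e0] e0 unfolding limitin_def openin_scott by blast
        then obtain N0 where N0: "\<And>n. n \<ge> N0 \<Longrightarrow> nb C (c n) e0" unfolding eventually_sequentially by auto
        have "\<exists>e\<in>D. nb C (c n) e" if "n \<ge> N" for n
        proof -
          have "d \<in> {v. nb C (c n) v}" using a that unfolding V_def by blast
          then have "D \<inter> {v. nb C (c n) v} \<noteq> {}" using a opn2[of "c n"] unfolding scott_open_def by blast
          then show ?thesis by blast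
        qed
        then obtain f where f: "\<And>n. n \<ge> N \<Longrightarrow> f n \<in> D \<and> nb C (c n) (f n)" by metis
        have "finite (insert e0 (f ` {N..<N0}))" by simp
        moreover have "insert e0 (f ` {N..<N0}) \<subseteq> D" using e0 f by auto
        ultimately obtain e where e: "e \<in> D" "\<forall>x\<in>insert e0 (f ` {N..<N0}). x \<le> e"
          using directed_finite_ub a by blast
        have "e \<in> V"
          unfolding V_def
        proof (intro CollectI conjI allI impI)
          show "nb C a e" using e0 e nb_mono by blast
        next
          fix n assume n: "N \<le> n"
          show "nb C (c n) e"
          proof (cases "n < N0")
            case True
            then have "f n \<le> e" using e n by auto
            then show ?thesis using f[OF n] nb_mono by blast
          next
            case False
            then have "nb C (c n) e0" using N0 by simp
            moreover have "e0 \<le> e" using e by simp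
            ultimately show ?thesis using nb_mono by blast
          qed
        qed
        then show "D \<inter> V \<noteq> {}" using e by blast
      qed
      have "eventually (\<lambda>n. c n \<in> V) sequentially"
        using lb oV bV unfolding limitin_def openin_scott by blast
      then obtain N1 where N1: "\<And>n. n \<ge> N1 \<Longrightarrow> c n \<in> V" unfolding eventually_sequentially by auto
      have "c (max N N1) \<in> V" using N1 by simp
      then have "nb C (c (max N N1)) (c (max N N1))" unfolding V_def by simp
      then show False using cC' unfolding nb_def by blast
    qed
    have dirC: "directed C" unfolding directed_def using Cne bnd by blast
    then obtain s where s: "is_sup C s" using assms(1) unfolding dcpo_def by blast
    have sC: "s \<in> C" using closed_sup[OF cC dirC _ s] by blast
    have "C = ?X closure_of {s}"
    proof
      show "?X closure_of {s} \<subseteq> C" using closure_of_minimal[OF _ Ccl] sC by blast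
    next
      have "s \<in> ?X closure_of {s}" using closure_of_subset[of "{s}" ?X] by (simp add: topspace_scott)
      then show "C \<subseteq> ?X closure_of {s}"
      proof -
        assume sc: "s \<in> ?X closure_of {s}"
        { fix x assume "x \<in> C"
          then have "x \<le> s" using s unfolding is_sup_def by blast
          then have "x \<in> ?X closure_of {s}" using closedin_lower[OF closedin_closure_of sc] by blast }
        then show ?thesis by blast
      qed
    qed
    then show ?thesis by (auto simp: topspace_scott)
  qed
  show ?thesis unfolding sober_space_def using t0 irr by blast
qed

end
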